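(* Let $n\ge3$ and let $C_n=X(\mathbb{Z}_n,\{\pm1\})$ be the cycle graph on $n$ vertices. (i) If $n$ is odd, then $C_n$ does not admit perfect state transfer between distinct vertex type states. (ii) If $n=2l$ is even, then $C_n$ admits perfect state transfer from $d^*e_x$ to $d^*e_{x+l}$ (for every vertex $x$), and the minimum time at which it occurs is $l$.
   Context: For a graph with symmetric arc set $\mathcal{A}$ ($t((x,y))=y$, $(x,y)^{-1}=(y,x)$): boundary matrix $d_{x,a}=\frac{1}{\sqrt{\deg x}}\delta_{x,t(a)}$, shift matrix $R_{a,b}=\delta_{a,b^{-1}}$, Grover time evolution matrix $U=R(2d^*d-I_{\mathcal{A}})$; $e_x$ is the standard unit vector at vertex $x$ and $d^*e_x$ is a vertex type state. Perfect state transfer from a state $\Phi$ to a distinct state $\Psi$ at time $\tau\in\mathbb{Z}_{\ge1}$ means $U^\tau\Phi=\gamma\Psi$ for some $|\gamma|=1$. $X(\mathbb{Z}_n,S)$ denotes the circulant graph with vertex set $\mathbb{Z}_n$ and edges $\{x,y\}$ with $y-x\in S$. *)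

theory Defs
  imports Complex_Main
begin

(* Vectors on arcs: ('v \<times> 'v) \<Rightarrow> complex (zero off the arc set A);
   vectors on vertices: 'v \<Rightarrow> complex. Arc a = (x,y) has terminus t(a) = snd a,
   inverse a^{-1} = (snd a, fst a). *)

definition deg :: "('v \<times> 'v) set \<Rightarrow> 'v \<Rightarrow> nat" where
  "deg A x = card {a \<in> A. snd a = x}"

definition dmat :: "('v \<times> 'v) set \<Rightarrow> 'v \<Rightarrow> ('v \<times> 'v) \<Rightarrow> complex" where
  "dmat A x a = (if a \<in> A \<and> snd a = x then complex_of_real (1 / sqrt (real (deg A x))) else 0)"

definition d_op :: "('v \<times> 'v) set \<Rightarrow> (('v \<times> 'v) \<Rightarrow> complex) \<Rightarrow> 'v \<Rightarrow> complex" where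
  "d_op A \<psi> x = (\<Sum>a\<in>A. dmat A x a * \<psi> a)"

definition dstar_op :: "('v \<times> 'v) set \<Rightarrow> 'v set \<Rightarrow> ('v \<Rightarrow> complex) \<Rightarrow> ('v \<times> 'v) \<Rightarrow> complex" where
  "dstar_op A V \<phi> a = (\<Sum>x\<in>V. cnj (dmat A x a) * \<phi> x)"

definition R_op :: "('v \<times> 'v) set \<Rightarrow> (('v \<times> 'v) \<Rightarrow> complex) \<Rightarrow> ('v \<times> 'v) \<Rightarrow> complex" where
  "R_op A \<psi> a = (\<Sum>b\<in>A. (if a \<in> A \<and> a = (snd b, fst b) then 1 else 0) * \<psi> b)"

definition I_op :: "('v \<times> 'v) set \<Rightarrow> (('v \<times> 'v) \<Rightarrow> complex) \<Rightarrow> ('v \<times> 'v) \<Rightarrow> complex" where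
  "I_op A \<psi> a = (if a \<in> A then \<psi> a else 0)"

definition grover_U :: "('v \<times> 'v) set \<Rightarrow> 'v set \<Rightarrow> (('v \<times> 'v) \<Rightarrow> complex) \<Rightarrow> ('v \<times> 'v) \<Rightarrow> complex" where
  "grover_U A V \<psi> = R_op A (\<lambda>a. 2 * dstar_op A V (d_op A \<psi>) a - I_op A \<psi> a)"

definition unit_vec :: "'v \<Rightarrow> 'v \<Rightarrow> complex" where
  "unit_vec x = (\<lambda>y. if y = x then 1 else 0)"

definition vertex_state :: "('v \<times> 'v) set \<Rightarrow> 'v set \<Rightarrow> 'v \<Rightarrow> ('v \<times> 'v) \<Rightarrow> complex" where
  "vertex_state A V x = dstar_op A V (unit_vec x)"

definition pst :: "('v \<times> 'v) set \<Rightarrow> 'v set \<Rightarrow> (('v \<times> 'v) \<Rightarrow> complex) \<Rightarrow> (('v \<times> 'v) \<Rightarrow> complex) \<Rightarrow> nat \<Rightarrow> bool" where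
  "pst A V \<Phi> \<Psi> \<tau> \<longleftrightarrow> \<tau> \<ge> 1 \<and> \<Phi> \<noteq> \<Psi> \<and>
     (\<exists>\<gamma>. cmod \<gamma> = 1 \<and> (grover_U A V ^^ \<tau>) \<Phi> = (\<lambda>a. \<gamma> * \<Psi> a))"

definition circ_vertices :: "int \<Rightarrow> int set" where
  "circ_vertices n = {0..<n}"

definition circ_arcs :: "int \<Rightarrow> int set \<Rightarrow> (int \<times> int) set" where
  "circ_arcs n S = {(x, y). x \<in> {0..<n} \<and> y \<in> {0..<n} \<and> (\<exists>s\<in>S. (y - x) mod n = s mod n)}"

end

theory Submission imports Defs begin

lemma mod_char:
  fixes n u z :: int
  assumes "0 \<le> u" "u < n"
  shows "(u = z mod n) \<longleftrightarrow> n dvd (u - z)"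
proof -
  have "u mod n = u" using assms by simp
  then show ?thesis using mod_eq_dvd_iff[of u n z] by metis
qed

lemma A_iff:
  fixes n :: int
  shows "((u,v) \<in> circ_arcs n {1,-1}) \<longleftrightarrow>
     (0 \<le> u \<and> u < n \<and> 0 \<le> v \<and> v < n \<and> (n dvd (v - u - 1) \<or> n dvd (v - u + 1)))"
  unfolding circ_arcs_def
  using mod_eq_dvd_iff[of "v-u" n 1] mod_eq_dvd_iff[of "v-u" n "-1"]
  by (auto simp: algebra_simps)

lemma A_into:
  fixes n x :: int
  assumes n: "n \<ge> 3" and x: "0 \<le> x" "x < n"
  shows "(a \<in> circ_arcs n {1,-1} \<and> snd a = x) \<longleftrightarrow> (a = ((x-1) mod n, x) \<or> a = ((x+1) mod n, x))"
proof (cases a)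
  case (Pair u v)
  have np: "n > 0" using n by simp
  have r1: "0 \<le> (x-1) mod n" "(x-1) mod n < n" "0 \<le> (x+1) mod n" "(x+1) mod n < n" using np by auto
  show ?thesis
  proof
    assume h: "a \<in> circ_arcs n {1,-1} \<and> snd a = x"
    then have "0 \<le> u" "u < n" "v = x" "n dvd (v - u - 1) \<or> n dvd (v - u + 1)" using Pair A_iff by auto
    then show "a = ((x-1) mod n, x) \<or> a = ((x+1) mod n, x)"
    proof -
      have e1: "u - (x-1) = -(v - u - 1)" "u - (x+1) = -(v - u + 1)" using \<open>v = x\<close> by simp_all
      from \<open>n dvd (v - u - 1) \<or> n dvd (v - u + 1)\<close>
      have "n dvd (u - (x-1)) \<or> n dvd (u - (x+1))" unfolding e1 dvd_minus_iff .
      then show ?thesis using mod_char[of u n "x-1"] mod_char[of u n "x+1"] Pair \<open>0 \<le> u\<close> \<open>u < n\<close> \<open>v = x\<close> by auto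
    qed
  next
    assume h: "a = ((x-1) mod n, x) \<or> a = ((x+1) mod n, x)"
    then show "a \<in> circ_arcs n {1,-1} \<and> snd a = x"
    proof
      assume "a = ((x-1) mod n, x)"
      moreover have "n dvd (x - (x-1) mod n - 1)"
      proof -
        have "n dvd ((x-1) mod n - (x-1))" using mod_char[of "(x-1) mod n" n "x-1"] r1 by simp
        then have "n dvd (-((x-1) mod n - (x-1)))" by simp
        then show ?thesis by (simp add: algebra_simps)
      qed
      ultimately show ?thesis using A_iff r1 x by auto
    next
      assume "a = ((x+1) mod n, x)"
      moreover have "n dvd (x - (x+1) mod n + 1)"
      proof -
        have "n dvd ((x+1) mod n - (x+1))" using mod_char[of "(x+1) mod n" n "x+1"] r1 by simp
        then have "n dvd (-((x+1) mod n - (x+1)))" by simp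
        then show ?thesis by (simp add: algebra_simps)
      qed
      ultimately show ?thesis using A_iff r1 x by auto
    qed
  qed
qed

lemma A_finite: "finite (circ_arcs n {1,-1})"
proof -
  have "circ_arcs n {1,-1} \<subseteq> {0..<n} \<times> {0..<n}" unfolding circ_arcs_def by auto
  then show ?thesis by (rule finite_subset) auto
qed

lemma mods_distinct:
  fixes n x :: int assumes n: "n \<ge> 3"
  shows "(x-1) mod n \<noteq> (x+1) mod n"
proof
  assume "(x-1) mod n = (x+1) mod n"
  then have "n dvd ((x-1) - (x+1))" using mod_eq_dvd_iff by blast
  moreover have "(x-1) - (x+1) = - 2" by simp
  ultimately have "n dvd - 2" by simp
  then have "n dvd 2" by (simp only: dvd_minus_iff)
  then have "n \<le> 2" using zdvd_imp_le[of n 2] by simp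
  then show False using n by simp
qed

lemma into_set:
  fixes n x :: int
  assumes n: "n \<ge> 3" and x: "0 \<le> x" "x < n"
  shows "{a \<in> circ_arcs n {1,-1}. snd a = x} = {((x-1) mod n, x), ((x+1) mod n, x)}"
  using A_into[OF n x] by blast

lemma deg_eq:
  fixes n x :: int
  assumes n: "n \<ge> 3" and x: "0 \<le> x" "x < n"
  shows "deg (circ_arcs n {1,-1}) x = 2"
  unfolding deg_def into_set[OF n x] using mods_distinct[OF n, of x] by simp

definition cc :: complex where "cc = complex_of_real (1 / sqrt 2)"

lemma dmat_eq:
  fixes n x :: int
  assumes n: "n \<ge> 3"
  shows "dmat (circ_arcs n {1,-1}) x a = (if a \<in> circ_arcs n {1,-1} \<and> snd a = x then cc else 0)"
proof (cases "a \<in> circ_arcs n {1,-1} \<and> snd a = x")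
  case True
  then have "0 \<le> x" "x < n" using A_iff[of "fst a" "snd a" n] by auto
  then show ?thesis using True deg_eq[OF n] unfolding dmat_def cc_def by simp
next
  case False then show ?thesis unfolding dmat_def by auto
qed

lemma d_eq:
  fixes n x :: int
  assumes n: "n \<ge> 3" and x: "0 \<le> x" "x < n"
  shows "d_op (circ_arcs n {1,-1}) \<psi> x = cc * (\<psi> ((x-1) mod n, x) + \<psi> ((x+1) mod n, x))"
proof -
  let ?A = "circ_arcs n {1,-1}"
  have "d_op ?A \<psi> x = (\<Sum>a\<in>?A. if snd a = x then cc * \<psi> a else 0)"
    unfolding d_op_def dmat_eq[OF n] by (rule sum.cong) auto
  also have "\<dots> = (\<Sum>a\<in>{a \<in> ?A. snd a = x}. cc * \<psi> a)"
    by (rule sum.inter_filter[symmetric]) (rule A_finite)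
  also have "\<dots> = cc * (\<psi> ((x-1) mod n, x) + \<psi> ((x+1) mod n, x))"
    unfolding into_set[OF n x] using mods_distinct[OF n, of x] by (simp add: algebra_simps)
  finally show ?thesis .
qed

lemma dstar_eq:
  fixes n :: int
  assumes n: "n \<ge> 3" and a: "a \<in> circ_arcs n {1,-1}"
  shows "dstar_op (circ_arcs n {1,-1}) (circ_vertices n) \<phi> a = cc * \<phi> (snd a)"
proof -
  have sv: "snd a \<in> circ_vertices n" using a A_iff[of "fst a" "snd a" n] unfolding circ_vertices_def by auto
  have "dstar_op (circ_arcs n {1,-1}) (circ_vertices n) \<phi> a = (\<Sum>x\<in>circ_vertices n. if snd a = x then cc * \<phi> x else 0)"
    unfolding dstar_op_def dmat_eq[OF n] cc_def using a by (intro sum.cong) auto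
  also have "\<dots> = cc * \<phi> (snd a)" using sv unfolding circ_vertices_def by simp
  finally show ?thesis .
qed

lemma A_sym: "(u,v) \<in> circ_arcs n {1,-1} \<Longrightarrow> (v,u) \<in> circ_arcs n {1,-1}"
proof -
  assume h: "(u,v) \<in> circ_arcs n {1,-1}"
  have e: "u - v - 1 = -(v - u + 1)" "u - v + 1 = -(v - u - 1)" by simp_all
  show ?thesis using h unfolding A_iff e dvd_minus_iff by blast
qed

lemma R_eq:
  assumes a: "a \<in> circ_arcs n {1,-1}"
  shows "R_op (circ_arcs n {1,-1}) \<phi> a = \<phi> (snd a, fst a)"
proof -
  have sa: "(snd a, fst a) \<in> circ_arcs n {1,-1}" using a A_sym[of "fst a" "snd a" n] by simp
  have "R_op (circ_arcs n {1,-1}) \<phi> a = (\<Sum>b\<in>circ_arcs n {1,-1}. if b = (snd a, fst a) then \<phi> b else 0)"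
    unfolding R_op_def using a by (intro sum.cong) auto
  also have "\<dots> = \<phi> (snd a, fst a)" using sa A_finite by simp
  finally show ?thesis .
qed

lemma cc_sq: "2 * cc * cc = 1"
proof -
  have "2 * (1 / sqrt 2) * (1 / sqrt 2) = (1::real)" by (simp add: field_simps)
  then show ?thesis unfolding cc_def by (metis of_real_1 of_real_mult of_real_numeral)
qed

lemma U_eq:
  fixes n :: int
  assumes n: "n \<ge> 3"
  shows "grover_U (circ_arcs n {1,-1}) (circ_vertices n) \<psi> (u,v) =
     (if (u,v) \<in> circ_arcs n {1,-1} then \<psi> ((2*u - v) mod n, u) else 0)"
proof (cases "(u,v) \<in> circ_arcs n {1,-1}")
  case True
  let ?A = "circ_arcs n {1,-1}"
  have vu: "(v,u) \<in> ?A" using A_sym True by blast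
  have u: "0 \<le> u" "u < n" using True A_iff by auto
  have "grover_U ?A (circ_vertices n) \<psi> (u,v) = 2 * (cc * (cc * (\<psi> ((u-1) mod n, u) + \<psi> ((u+1) mod n, u)))) - \<psi> (v,u)"
    unfolding grover_U_def R_eq[OF True] using vu by (simp add: dstar_eq[OF n vu] d_eq[OF n u] I_op_def)
  also have "\<dots> = (2*cc*cc) * (\<psi> ((u-1) mod n, u) + \<psi> ((u+1) mod n, u)) - \<psi> (v,u)"
    by (simp only: mult.assoc)
  also have "\<dots> = \<psi> ((u-1) mod n, u) + \<psi> ((u+1) mod n, u) - \<psi> (v,u)"
    by (simp only: cc_sq mult_1)
  also have "\<dots> = \<psi> ((2*u - v) mod n, u)"
  proof -
    have "v = (u-1) mod n \<or> v = (u+1) mod n" using A_into[OF n u, of "(v,u)"] vu by simp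
    then show ?thesis
    proof
      assume hv: "v = (u-1) mod n"
      have "(2*u - v) mod n = (2*u - (u-1)) mod n" unfolding hv by (simp add: mod_diff_right_eq)
      also have "\<dots> = (u+1) mod n" by (simp add: algebra_simps)
      finally show ?thesis using hv by simp
    next
      assume hv: "v = (u+1) mod n"
      have "(2*u - v) mod n = (2*u - (u+1)) mod n" unfolding hv by (simp add: mod_diff_right_eq)
      also have "\<dots> = (u-1) mod n" by (simp add: algebra_simps)
      finally show ?thesis using hv by simp
    qed
  qed
  finally show ?thesis using True by simp
next
  case False
  then show ?thesis unfolding grover_U_def R_op_def by simp
qed

lemma step_char:
  fixes n u v z s :: int
  assumes "0 \<le> u" "u < n" "0 \<le> v" "v < n"
  shows "((2*u - v) mod n = (z - s) mod n \<and> u = z mod n) \<longleftrightarrow> (u = z mod n \<and> v = (z + s) mod n)"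
proof -
  have e: "2*u - v - (z - s) = 2*(u - z) - (v - (z + s))" by (simp add: algebra_simps)
  have "((2*u - v) mod n = (z - s) mod n) \<longleftrightarrow> n dvd (2*(u - z) - (v - (z + s)))"
    using mod_eq_dvd_iff e by metis
  moreover have "u = z mod n \<longleftrightarrow> n dvd (u - z)" using mod_char assms by blast
  moreover have "v = (z + s) mod n \<longleftrightarrow> n dvd (v - (z + s))" using mod_char assms by blast
  moreover have "n dvd (u - z) \<Longrightarrow> n dvd (2*(u - z) - (v - (z + s))) \<longleftrightarrow> n dvd (v - (z + s))"
  proof -
    assume "n dvd (u - z)"
    then have "n dvd (2*(u-z))" by (rule dvd_mult)
    then show ?thesis using dvd_diff_right_iff by blast
  qed
  ultimately show ?thesis by blast
qed

lemma step_char2: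
  fixes n u v z s :: int
  assumes "0 \<le> u" "u < n" "0 \<le> v" "v < n"
  shows "z' = z \<Longrightarrow> z - s = p \<Longrightarrow> z + s = q \<Longrightarrow>
    ((2*u - v) mod n = p mod n \<and> u = z mod n) \<longleftrightarrow> (u = z' mod n \<and> v = q mod n)"
  using step_char[OF assms, of z s] by blast

lemma prev_in_A:
  fixes n :: int
  assumes n: "n \<ge> 3" and h: "(u,v) \<in> circ_arcs n {1,-1}"
  shows "((2*u - v) mod n, u) \<in> circ_arcs n {1,-1}"
proof -
  have u: "0 \<le> u" "u < n" using h A_iff by auto
  have vu: "(v,u) \<in> circ_arcs n {1,-1}" using A_sym h by blast
  have "v = (u-1) mod n \<or> v = (u+1) mod n" using A_into[OF n u, of "(v,u)"] vu by simp
  then have "(2*u - v) mod n = (u+1) mod n \<or> (2*u - v) mod n = (u-1) mod n"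
  proof
    assume hv: "v = (u-1) mod n"
    have "(2*u - v) mod n = (2*u - (u-1)) mod n" unfolding hv by (simp add: mod_diff_right_eq)
    then show ?thesis by (simp add: algebra_simps)
  next
    assume hv: "v = (u+1) mod n"
    have "(2*u - v) mod n = (2*u - (u+1)) mod n" unfolding hv by (simp add: mod_diff_right_eq)
    then show ?thesis by (simp add: algebra_simps)
  qed
  then show ?thesis using A_into[OF n u] by blast
qed

definition Fst :: "int \<Rightarrow> int \<Rightarrow> nat \<Rightarrow> (int \<times> int) \<Rightarrow> complex" where
  "Fst n x t = (\<lambda>a. if a \<in> circ_arcs n {1,-1} \<and>
      (a = ((x + int t - 1) mod n, (x + int t) mod n) \<or> a = ((x - int t + 1) mod n, (x - int t) mod n))
      then cc else 0)"

lemma vs_eq: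
  fixes n x :: int
  assumes n: "n \<ge> 3" and x: "0 \<le> x" "x < n"
  shows "vertex_state (circ_arcs n {1,-1}) (circ_vertices n) x = Fst n x 0"
proof
  fix a
  show "vertex_state (circ_arcs n {1,-1}) (circ_vertices n) x a = Fst n x 0 a"
  proof (cases "a \<in> circ_arcs n {1,-1}")
    case True
    have "vertex_state (circ_arcs n {1,-1}) (circ_vertices n) x a = (if snd a = x then cc else 0)"
      unfolding vertex_state_def dstar_eq[OF n True] unit_vec_def by simp
    also have "\<dots> = Fst n x 0 a" unfolding Fst_def using A_into[OF n x, of a] True x by auto
    finally show ?thesis .
  next
    case False
    then show ?thesis unfolding vertex_state_def dstar_op_def Fst_def dmat_eq[OF n] by simp
  qed
qed

lemma pow_eq:
  fixes n x :: int
  assumes n: "n \<ge> 3" and x: "0 \<le> x" "x < n"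
  shows "(grover_U (circ_arcs n {1,-1}) (circ_vertices n) ^^ t) (vertex_state (circ_arcs n {1,-1}) (circ_vertices n) x) = Fst n x t"
proof (induction t)
  case 0
  then show ?case using vs_eq[OF n x] by simp
next
  case (Suc t)
  show ?case
  proof
    fix a :: "int \<times> int"
    obtain u v where a: "a = (u,v)" by fastforce
    show "(grover_U (circ_arcs n {1,-1}) (circ_vertices n) ^^ Suc t) (vertex_state (circ_arcs n {1,-1}) (circ_vertices n) x) a = Fst n x (Suc t) a"
    proof (cases "(u,v) \<in> circ_arcs n {1,-1}")
      case True
      have uv: "0 \<le> u" "u < n" "0 \<le> v" "v < n" using True A_iff by auto
      have "(grover_U (circ_arcs n {1,-1}) (circ_vertices n) ^^ Suc t) (vertex_state (circ_arcs n {1,-1}) (circ_vertices n) x) a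
          = Fst n x t ((2*u - v) mod n, u)" using Suc True a by (simp add: U_eq[OF n])
      also have "\<dots> = Fst n x (Suc t) a"
      proof -
        have k1: "(((2*u - v) mod n, u) = ((x + int t - 1) mod n, (x + int t) mod n)) \<longleftrightarrow>
                 ((u,v) = ((x + int (Suc t) - 1) mod n, (x + int (Suc t)) mod n))"
          unfolding prod.inject using step_char2[OF uv, of "x + int (Suc t) - 1" "x + int t" 1 "x + int t - 1" "x + int (Suc t)"] by simp
        have k2: "(((2*u - v) mod n, u) = ((x - int t + 1) mod n, (x - int t) mod n)) \<longleftrightarrow>
                 ((u,v) = ((x - int (Suc t) + 1) mod n, (x - int (Suc t)) mod n))"
          unfolding prod.inject using step_char2[OF uv, of "x - int (Suc t) + 1" "x - int t" "-1" "x - int t + 1" "x - int (Suc t)"] by simp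
        show ?thesis unfolding Fst_def a k1 k2 using prev_in_A[OF n True] True by simp
      qed
      finally show ?thesis .
    next
      case False
      then show ?thesis using a by (simp add: U_eq[OF n] Fst_def)
    qed
  qed
qed

lemma cc_nz: "cc \<noteq> 0" using cc_sq by auto

lemma no2:
  fixes n a b :: int
  assumes "n \<ge> 3" "n dvd a" "n dvd b" "a - b = 2 \<or> a - b = -2"
  shows False
proof -
  have "n dvd (a - b)" using assms by simp
  then have "n dvd 2" using assms(4) by auto
  then have "n \<le> 2" by (simp add: zdvd_imp_le)
  then show False using assms by simp
qed

lemma vs_val:
  fixes n x :: int
  assumes n: "n \<ge> 3" and a: "a \<in> circ_arcs n {1,-1}"
  shows "vertex_state (circ_arcs n {1,-1}) (circ_vertices n) x a = (if snd a = x then cc else 0)"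
  unfolding vertex_state_def dstar_eq[OF n a] unit_vec_def by simp

lemma pst_cond:
  fixes n x y :: int and \<gamma> :: complex
  assumes n: "n \<ge> 3" and x: "0 \<le> x" "x < n" and y: "0 \<le> y" "y < n"
    and g: "\<gamma> \<noteq> 0"
    and h: "(grover_U (circ_arcs n {1,-1}) (circ_vertices n) ^^ t) (vertex_state (circ_arcs n {1,-1}) (circ_vertices n) x)
          = (\<lambda>a. \<gamma> * vertex_state (circ_arcs n {1,-1}) (circ_vertices n) y a)"
  shows "n dvd (y - x - int t) \<and> n dvd (y - x + int t)"
proof -
  have F: "Fst n x t = (\<lambda>a. \<gamma> * vertex_state (circ_arcs n {1,-1}) (circ_vertices n) y a)"
    using h pow_eq[OF n x] by simp
  have ymod: "y mod n = y" using y by simp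
  define a0 where "a0 = ((y-1) mod n, y)"
  define a1 where "a1 = ((y+1) mod n, y)"
  have a0A: "a0 \<in> circ_arcs n {1,-1}" using A_into[OF n y, of a0] a0_def by simp
  have a1A: "a1 \<in> circ_arcs n {1,-1}" using A_into[OF n y, of a1] a1_def by simp
  have "Fst n x t a0 \<noteq> 0" unfolding F using vs_val[OF n a0A] a0_def g cc_nz by simp
  then have c0: "a0 = ((x + int t - 1) mod n, (x + int t) mod n) \<or> a0 = ((x - int t + 1) mod n, (x - int t) mod n)"
    unfolding Fst_def by (auto split: if_splits)
  have "Fst n x t a1 \<noteq> 0" unfolding F using vs_val[OF n a1A] a1_def g cc_nz by simp
  then have c1: "a1 = ((x + int t - 1) mod n, (x + int t) mod n) \<or> a1 = ((x - int t + 1) mod n, (x - int t) mod n)"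
    unfolding Fst_def by (auto split: if_splits)
  have d1: "n dvd (y - x - int t)"
    using c0
  proof
    assume asm: "a0 = ((x + int t - 1) mod n, (x + int t) mod n)"
    then have "((y-1) mod n, y) = ((x + int t - 1) mod n, (x + int t) mod n)" by (simp only: a0_def)
    then have e2: "y = (x + int t) mod n" by (rule conjunct2[OF iffD1[OF prod.inject]])
    have "y mod n = (x + int t) mod n" using e2 by simp
    then show ?thesis using mod_eq_dvd_iff by (metis diff_diff_eq)
  next
    assume "a0 = ((x - int t + 1) mod n, (x - int t) mod n)"
    then have "((y-1) mod n, y) = ((x - int t + 1) mod n, (x - int t) mod n)" by (simp only: a0_def)
    then have c12: "(y-1) mod n = (x - int t + 1) mod n \<and> y = (x - int t) mod n" by (rule iffD1[OF prod.inject])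
    note e1 = conjunct1[OF c12] and e2' = conjunct2[OF c12]
    have e2: "y mod n = (x - int t) mod n" using e2' by simp
    have "n dvd ((y-1) - (x - int t + 1))" using e1 mod_eq_dvd_iff by blast
    moreover have "n dvd (y - (x - int t))" using e2 mod_eq_dvd_iff by blast
    ultimately show ?thesis using no2[OF n, of "y - (x - int t)" "(y-1) - (x - int t + 1)"] by simp
  qed
  have d2: "n dvd (y - x + int t)"
    using c1
  proof
    assume "a1 = ((x + int t - 1) mod n, (x + int t) mod n)"
    then have "((y+1) mod n, y) = ((x + int t - 1) mod n, (x + int t) mod n)" by (simp only: a1_def)
    then have c12: "(y+1) mod n = (x + int t - 1) mod n \<and> y = (x + int t) mod n" by (rule iffD1[OF prod.inject])
    note e1 = conjunct1[OF c12] and e2' = conjunct2[OF c12]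
    have e2: "y mod n = (x + int t) mod n" using e2' by simp
    have "n dvd ((y+1) - (x + int t - 1))" using e1 mod_eq_dvd_iff by blast
    moreover have "n dvd (y - (x + int t))" using e2 mod_eq_dvd_iff by blast
    ultimately show ?thesis using no2[OF n, of "(y+1) - (x + int t - 1)" "y - (x + int t)"] by simp
  next
    assume "a1 = ((x - int t + 1) mod n, (x - int t) mod n)"
    then have "((y+1) mod n, y) = ((x - int t + 1) mod n, (x - int t) mod n)" by (simp only: a1_def)
    then have e2: "y = (x - int t) mod n" by (rule conjunct2[OF iffD1[OF prod.inject]])
    have "y mod n = (x - int t) mod n" using e2 by simp
    then have "n dvd (y - (x - int t))" using mod_eq_dvd_iff by blast
    then show ?thesis by (simp add: algebra_simps)
  qed
  show ?thesis using d1 d2 by simp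
qed

lemma vs_distinct:
  fixes n x y :: int
  assumes n: "n \<ge> 3" and x: "0 \<le> x" "x < n" and xy: "x \<noteq> y"
  shows "vertex_state (circ_arcs n {1,-1}) (circ_vertices n) x \<noteq> vertex_state (circ_arcs n {1,-1}) (circ_vertices n) y"
proof
  define a where "a = ((x-1) mod n, x)"
  have aA: "a \<in> circ_arcs n {1,-1}" using A_into[OF n x, of a] a_def by simp
  assume "vertex_state (circ_arcs n {1,-1}) (circ_vertices n) x = vertex_state (circ_arcs n {1,-1}) (circ_vertices n) y"
  then have "vertex_state (circ_arcs n {1,-1}) (circ_vertices n) x a = vertex_state (circ_arcs n {1,-1}) (circ_vertices n) y a" by simp
  then show False using vs_val[OF n aA] a_def xy cc_nz by simp
qed

theorem theorem5p1:
  fixes n :: int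
  assumes "n \<ge> 3"
  shows "(odd n \<longrightarrow>
            \<not> (\<exists>x\<in>circ_vertices n. \<exists>y\<in>circ_vertices n. \<exists>\<tau>.
                  pst (circ_arcs n {1, -1}) (circ_vertices n)
                      (vertex_state (circ_arcs n {1, -1}) (circ_vertices n) x)
                      (vertex_state (circ_arcs n {1, -1}) (circ_vertices n) y) \<tau>))
       \<and> (\<forall>l. n = 2 * l \<longrightarrow>
            (\<forall>x\<in>circ_vertices n.
               pst (circ_arcs n {1, -1}) (circ_vertices n)
                   (vertex_state (circ_arcs n {1, -1}) (circ_vertices n) x)
                   (vertex_state (circ_arcs n {1, -1}) (circ_vertices n) ((x + l) mod n)) (nat l)
             \<and> (\<forall>\<tau>. pst (circ_arcs n {1, -1}) (circ_vertices n)
                   (vertex_state (circ_arcs n {1, -1}) (circ_vertices n) x)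
                   (vertex_state (circ_arcs n {1, -1}) (circ_vertices n) ((x + l) mod n)) \<tau>
                   \<longrightarrow> \<tau> \<ge> nat l)))"
proof (intro conjI impI allI ballI)
  have n: "n \<ge> 3" by fact
  assume odd: "odd n"
  show "\<not> (\<exists>x\<in>circ_vertices n. \<exists>y\<in>circ_vertices n. \<exists>\<tau>.
                  pst (circ_arcs n {1, -1}) (circ_vertices n)
                      (vertex_state (circ_arcs n {1, -1}) (circ_vertices n) x)
                      (vertex_state (circ_arcs n {1, -1}) (circ_vertices n) y) \<tau>)"
  proof
    assume "\<exists>x\<in>circ_vertices n. \<exists>y\<in>circ_vertices n. \<exists>\<tau>.
                  pst (circ_arcs n {1, -1}) (circ_vertices n)
                      (vertex_state (circ_arcs n {1, -1}) (circ_vertices n) x)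
                      (vertex_state (circ_arcs n {1, -1}) (circ_vertices n) y) \<tau>"
    then obtain x y \<tau> \<gamma> where x: "0 \<le> x" "x < n" and y: "0 \<le> y" "y < n"
      and ne: "vertex_state (circ_arcs n {1, -1}) (circ_vertices n) x \<noteq> vertex_state (circ_arcs n {1, -1}) (circ_vertices n) y"
      and g: "cmod \<gamma> = 1"
      and h: "(grover_U (circ_arcs n {1,-1}) (circ_vertices n) ^^ \<tau>) (vertex_state (circ_arcs n {1,-1}) (circ_vertices n) x)
          = (\<lambda>a. \<gamma> * vertex_state (circ_arcs n {1,-1}) (circ_vertices n) y a)"
      unfolding pst_def circ_vertices_def by auto
    have g0: "\<gamma> \<noteq> 0" using g by auto
    from pst_cond[OF n x y g0 h] have ds: "n dvd ((y - x - int \<tau>) + (y - x + int \<tau>))" by (simp only: dvd_add)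
    have eq2: "(y - x - int \<tau>) + (y - x + int \<tau>) = 2 * (y - x)" by simp
    have d2: "n dvd 2 * (y - x)" using ds unfolding eq2 .
    have cp: "coprime n 2" using odd by simp
    have d1: "n dvd (y - x)" by (rule iffD1[OF coprime_dvd_mult_right_iff[OF cp] d2])
    have lt: "\<bar>y - x\<bar> < n" using x y by simp
    have "y - x = 0"
    proof (rule ccontr)
      assume nz: "y - x \<noteq> 0"
      have "\<bar>n\<bar> \<le> \<bar>y - x\<bar>" by (rule dvd_imp_le_int[OF nz d1])
      then show False using lt by simp
    qed
    then show False using ne by simp
  qed
next
  fix l x
  assume nl: "n = 2 * l" and xV: "x \<in> circ_vertices n"
  have n: "n \<ge> 3" by fact
  have x: "0 \<le> x" "x < n" using xV unfolding circ_vertices_def by auto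
  have l: "l \<ge> 2" using n nl by simp
  define y where "y = (x + l) mod n"
  have y: "0 \<le> y" "y < n" using n y_def by auto
  have ydvd: "n dvd (y - (x + l))" using mod_char[OF y] y_def by blast
  have xy: "x \<noteq> y"
  proof
    assume "x = y"
    then have "n dvd (-l)" using ydvd by simp
    then have "n dvd l" by simp
    then have "n \<le> l" using l zdvd_imp_le[of n l] by simp
    then show False using nl l by simp
  qed
  show "pst (circ_arcs n {1, -1}) (circ_vertices n)
                   (vertex_state (circ_arcs n {1, -1}) (circ_vertices n) x)
                   (vertex_state (circ_arcs n {1, -1}) (circ_vertices n) ((x + l) mod n)) (nat l)"
    unfolding pst_def y_def[symmetric]
  proof (intro conjI exI)
    show "1 \<le> nat l" using l by simp
    show "vertex_state (circ_arcs n {1, -1}) (circ_vertices n) x \<noteq> vertex_state (circ_arcs n {1, -1}) (circ_vertices n) y"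
      using vs_distinct[OF n x xy] .
    show "cmod 1 = 1" by simp
    have e1: "(x + int (nat l) - 1) mod n = (y - 1) mod n"
      using l by (simp add: y_def mod_diff_left_eq)
    have e2: "(x + int (nat l)) mod n = y mod n"
      using l by (simp add: y_def)
    have e3: "(x - int (nat l) + 1) mod n = (y + 1) mod n"
    proof -
      have "(y + 1) mod n = (x + l + 1) mod n" by (simp add: y_def mod_add_left_eq)
      also have "\<dots> = ((x - l + 1) + 1 * n) mod n"
      proof -
        have "x + l + 1 = (x - l + 1) + 1 * n" using nl by simp
        then show ?thesis by (rule arg_cong)
      qed
      also have "\<dots> = (x - l + 1) mod n" by (rule mod_mult_self1)
      finally show ?thesis using l by simp
    qed
    have e4: "(x - int (nat l)) mod n = y mod n"
    proof -
      have "y mod n = (x + l) mod n" by (simp add: y_def)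
      also have "\<dots> = ((x - l) + 1 * n) mod n"
      proof -
        have "x + l = (x - l) + 1 * n" using nl by simp
        then show ?thesis by (rule arg_cong)
      qed
      also have "\<dots> = (x - l) mod n" by (rule mod_mult_self1)
      finally show ?thesis using l by simp
    qed
    have "Fst n x (nat l) = Fst n y 0" unfolding Fst_def e1 e2 e3 e4 by simp
    then show "(grover_U (circ_arcs n {1, -1}) (circ_vertices n) ^^ nat l) (vertex_state (circ_arcs n {1, -1}) (circ_vertices n) x)
        = (\<lambda>a. 1 * vertex_state (circ_arcs n {1, -1}) (circ_vertices n) y a)"
      using pow_eq[OF n x] vs_eq[OF n y] by simp
  qed
  show "\<tau> \<ge> nat l" if hp: "pst (circ_arcs n {1, -1}) (circ_vertices n)
                   (vertex_state (circ_arcs n {1, -1}) (circ_vertices n) x)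
                   (vertex_state (circ_arcs n {1, -1}) (circ_vertices n) ((x + l) mod n)) \<tau>" for \<tau>
  proof -
    from hp
    obtain \<gamma> where t1: "\<tau> \<ge> 1" and g: "cmod \<gamma> = 1"
      and h: "(grover_U (circ_arcs n {1,-1}) (circ_vertices n) ^^ \<tau>) (vertex_state (circ_arcs n {1,-1}) (circ_vertices n) x)
          = (\<lambda>a. \<gamma> * vertex_state (circ_arcs n {1,-1}) (circ_vertices n) y a)"
      unfolding pst_def y_def by auto
    have g0: "\<gamma> \<noteq> 0" using g by auto
    from pst_cond[OF n x y g0 h] have "n dvd (y - x + int \<tau>)" by simp
    then have "n dvd ((y - x + int \<tau>) - (y - (x + l)))" using ydvd by (simp only: dvd_diff)
    then have "n dvd (int \<tau> + l)" by (simp add: algebra_simps)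
    moreover have "int \<tau> + l > 0" using l by simp
    ultimately have "n \<le> int \<tau> + l" by (rule zdvd_imp_le)
    then show "\<tau> \<ge> nat l" using nl by simp
  qed
qed

end
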